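(* Let $Y=\langle X,\beta^*\rangle=\sum_{j=1}^pX_j\beta^*_j$ where $X\in\mathbb{Z}^p$ and $\beta^*\in\mathbb{R}^p$ with $\beta^*_j\in\mathcal{S}=\{a_1,\dots,a_{\mathcal{R}}\}$ for every $j$, where $\mathcal{S}$ is rationally independent. Let $t=(t_0,t_1,\dots,t_{\mathcal{R}})$ be an integer relation for the vector $(Y,a_1,\dots,a_{\mathcal{R}})$. Then $t\in H$, where $$H=\{k(-1,\theta_1^*,\dots,\theta^*_{\mathcal{R}}):k\in\mathbb{Z}\setminus\{0\}\},\qquad \theta^*_i=\sum_{j:\beta^*_j=a_i}X_j.$$
   Context: A finite set of reals is rationally independent if the only rational linear combination of its elements equal to $0$ is the trivial one. An integer relation for $b\in\mathbb{R}^k$ is a nonzero $m\in\mathbb{Z}^k$ with $\langle b,m\rangle=0$. *)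

theory Defs
  imports Complex_Main
begin

definition rationally_independent :: "real set \<Rightarrow> bool" where
  "rationally_independent A \<longleftrightarrow> finite A \<and>
     (\<forall>c :: real \<Rightarrow> rat. (\<Sum>x\<in>A. real_of_rat (c x) * x) = 0 \<longrightarrow> (\<forall>x\<in>A. c x = 0))"

definition integer_relation :: "nat \<Rightarrow> (nat \<Rightarrow> real) \<Rightarrow> (nat \<Rightarrow> int) \<Rightarrow> bool" where
  "integer_relation n b m \<longleftrightarrow> (\<exists>i<n. m i \<noteq> 0) \<and> (\<Sum>i<n. b i * of_int (m i)) = 0"

end

theory Submission
  imports Defs
begin

theorem lemma3:
  fixes p R :: nat and X :: "nat \<Rightarrow> int" and \<beta> a :: "nat \<Rightarrow> real" and t :: "nat \<Rightarrow> int"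
  assumes inj: "inj_on a {1..R}"
    and indep: "rationally_independent (a ` {1..R})"
    and beta: "\<forall>j\<in>{1..p}. \<beta> j \<in> a ` {1..R}"
    and rel: "integer_relation (R + 1)
                (\<lambda>i. if i = 0 then (\<Sum>j=1..p. of_int (X j) * \<beta> j) else a i) t"
  shows "\<exists>k::int. k \<noteq> 0 \<and> t 0 = - k \<and>
           (\<forall>i\<in>{1..R}. t i = k * (\<Sum>j\<in>{j\<in>{1..p}. \<beta> j = a i}. X j))"
proof -
  define \<theta> where "\<theta> i = (\<Sum>j\<in>{j\<in>{1..p}. \<beta> j = a i}. X j)" for i
  define Y where "Y = (\<Sum>j=1..p. of_int (X j) * \<beta> j)"
  have one: "of_int (X j) * \<beta> j = (\<Sum>i=1..R. if \<beta> j = a i then of_int (X j) * a i else 0)"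
    if j: "j \<in> {1..p}" for j
  proof -
    obtain i0 where i0: "i0 \<in> {1..R}" "\<beta> j = a i0" using beta j by blast
    have "(\<Sum>i=1..R. if \<beta> j = a i then of_int (X j) * a i else 0)
        = (\<Sum>i\<in>{i0}. if \<beta> j = a i then of_int (X j) * a i else 0)"
    proof (rule sum.mono_neutral_right)
      show "finite {1..R}" by simp
      show "{i0} \<subseteq> {1..R}" using i0 by simp
      show "\<forall>i\<in>{1..R} - {i0}. (if \<beta> j = a i then of_int (X j) * a i else 0) = 0"
      proof
        fix i assume i: "i \<in> {1..R} - {i0}"
        have "a i \<noteq> a i0" using inj i i0(1) unfolding inj_on_def by blast
        then show "(if \<beta> j = a i then of_int (X j) * a i else 0) = 0" using i0(2) by simp
      qed
    qed
    also have "\<dots> = of_int (X j) * \<beta> j" using i0(2) by simp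
    finally show ?thesis by simp
  qed
  have Yeq: "Y = (\<Sum>i=1..R. of_int (\<theta> i) * a i)"
  proof -
    have "Y = (\<Sum>j=1..p. \<Sum>i=1..R. if \<beta> j = a i then of_int (X j) * a i else 0)"
      unfolding Y_def using one by (intro sum.cong) auto
    also have "\<dots> = (\<Sum>i=1..R. \<Sum>j=1..p. if \<beta> j = a i then of_int (X j) * a i else 0)"
      by (rule sum.swap)
    also have "\<dots> = (\<Sum>i=1..R. of_int (\<theta> i) * a i)"
    proof (rule sum.cong[OF refl])
      fix i
      have "(\<Sum>j=1..p. if \<beta> j = a i then of_int (X j) * a i else 0)
          = (\<Sum>j\<in>{j\<in>{1..p}. \<beta> j = a i}. of_int (X j) * a i)"
        by (rule sum.inter_filter[symmetric]) simp
      also have "\<dots> = of_int (\<theta> i) * a i"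
        unfolding \<theta>_def by (simp add: sum_distrib_right)
      finally show "(\<Sum>j=1..p. if \<beta> j = a i then of_int (X j) * a i else 0) = of_int (\<theta> i) * a i" .
    qed
    finally show ?thesis .
  qed
  have nz: "\<exists>i<R+1. t i \<noteq> 0" and s: "(\<Sum>i<R+1. (if i = 0 then Y else a i) * of_int (t i)) = 0"
    using rel unfolding integer_relation_def Y_def by blast+
  have split: "(\<Sum>i<R+1. (if i = 0 then Y else a i) * of_int (t i))
      = Y * of_int (t 0) + (\<Sum>i=1..R. a i * of_int (t i))"
  proof -
    have e: "{..<R+1} = insert 0 {1..R}" by auto
    have "(\<Sum>i<R+1. (if i = 0 then Y else a i) * of_int (t i))
        = (\<Sum>i\<in>insert 0 {1..R}. (if i = 0 then Y else a i) * of_int (t i))"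
      by (simp only: e)
    also have "\<dots> = Y * of_int (t 0) + (\<Sum>i=1..R. (if i = 0 then Y else a i) * of_int (t i))"
      by (subst sum.insert) auto
    also have "(\<Sum>i=1..R. (if i = 0 then Y else a i) * of_int (t i)) = (\<Sum>i=1..R. a i * of_int (t i))"
      by (rule sum.cong) auto
    finally show ?thesis .
  qed
  have comb: "(\<Sum>i=1..R. of_int (t 0 * \<theta> i + t i) * a i) = 0"
  proof -
    have "(\<Sum>i=1..R. of_int (t 0 * \<theta> i + t i) * a i)
        = (\<Sum>i=1..R. of_int (t 0) * (of_int (\<theta> i) * a i) + a i * of_int (t i))"
      by (rule sum.cong) (auto simp: distrib_right)
    also have "\<dots> = of_int (t 0) * Y + (\<Sum>i=1..R. a i * of_int (t i))"
      by (simp only: sum.distrib sum_distrib_left Yeq)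
    also have "\<dots> = 0" using s split by (simp add: mult.commute)
    finally show ?thesis .
  qed
  define c :: "real \<Rightarrow> rat" where "c x = of_int (t 0 * \<theta> (the_inv_into {1..R} a x) + t (the_inv_into {1..R} a x))" for x :: real
  have ci: "c (a i) = of_int (t 0 * \<theta> i + t i)" if "i \<in> {1..R}" for i
    unfolding c_def using the_inv_into_f_f[OF inj that] by simp
  have "(\<Sum>x\<in>a ` {1..R}. real_of_rat (c x) * x) = (\<Sum>i=1..R. real_of_rat (c (a i)) * a i)"
    by (rule sum.reindex[OF inj, unfolded comp_def])
  also have "\<dots> = (\<Sum>i=1..R. of_int (t 0 * \<theta> i + t i) * a i)"
    by (rule sum.cong) (auto simp: ci of_rat_add of_rat_mult)
  finally have "(\<Sum>x\<in>a ` {1..R}. real_of_rat (c x) * x) = 0" using comb by simp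
  then have c0: "\<forall>x\<in>a ` {1..R}. c x = 0" using indep unfolding rationally_independent_def by blast
  have ti: "t i = - t 0 * \<theta> i" if "i \<in> {1..R}" for i
  proof -
    have "(of_int (t 0 * \<theta> i + t i) :: rat) = 0" using ci[OF that] that \<open>\<forall>x\<in>a ` {1..R}. c x = 0\<close> by auto
    then have "t 0 * \<theta> i + t i = 0" by (simp only: of_int_eq_0_iff)
    then show ?thesis by simp
  qed
  have "t 0 \<noteq> 0"
  proof
    assume "t 0 = 0"
    have "t i = 0" if "i < R+1" for i
    proof (cases "i = 0")
      case False then have "i \<in> {1..R}" using that by auto
      then show ?thesis using ti \<open>t 0 = 0\<close> by simp
    qed (use \<open>t 0 = 0\<close> in simp)
    then have "\<forall>i<R+1. t i = 0" by blast
    then show False using nz by blast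
  qed
  then show ?thesis using ti unfolding \<theta>_def by (intro exI[of _ "- t 0"]) auto
qed

end
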